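(* Let $m\ge 1$ and let $G$ be any co-bipartite graph $\overline{B(K_m,K_2)}$, i.e. any graph whose vertex set is the disjoint union of a clique $K_m$ on $m$ vertices and a clique $K_2$ on $2$ vertices, with an arbitrary set of edges between $V(K_m)$ and $V(K_2)$. Then $G$ is word-representable.
   Context: A graph $G=(V,E)$ is word-representable if there exists a word $w$ over the alphabet $V$, containing every letter of $V$ at least once, such that for all distinct $x,y\in V$, the letters $x$ and $y$ alternate in $w$ (i.e., the subword of $w$ obtained by deleting all letters other than $x,y$ has no two equal consecutive letters) if and only if $xy\in E$. $\overline{B(K_m,K_n)}$ denotes a co-bipartite graph whose vertex set is partitioned into two cliques $K_m$ and $K_n$ of sizes $m$ and $n$, with arbitrary edges between the two cliques. *)

theory Defs
  imports Main
begin

definition simple_graph :: "'a set \<Rightarrow> ('a \<Rightarrow> 'a \<Rightarrow> bool) \<Rightarrow> bool" where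
  "simple_graph V E \<longleftrightarrow> finite V \<and> (\<forall>x y. E x y \<longrightarrow> x \<in> V \<and> y \<in> V)
     \<and> (\<forall>x y. E x y \<longrightarrow> E y x) \<and> (\<forall>x. \<not> E x x)"

definition alternate :: "'a list \<Rightarrow> 'a \<Rightarrow> 'a \<Rightarrow> bool" where
  "alternate w x y \<longleftrightarrow>
     (let u = filter (\<lambda>z. z = x \<or> z = y) w in
      \<forall>i. Suc i < length u \<longrightarrow> u ! i \<noteq> u ! Suc i)"

definition word_representable :: "'a set \<Rightarrow> ('a \<Rightarrow> 'a \<Rightarrow> bool) \<Rightarrow> bool" where
  "word_representable V E \<longleftrightarrow>
     (\<exists>w. set w = V \<and>
          (\<forall>x\<in>V. \<forall>y\<in>V. x \<noteq> y \<longrightarrow> (alternate w x y \<longleftrightarrow> E x y)))"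

end

theory Submission
  imports Defs
begin

definition alt_list :: "'a list \<Rightarrow> bool" where
  "alt_list u \<longleftrightarrow> (\<forall>i. Suc i < length u \<longrightarrow> u ! i \<noteq> u ! Suc i)"

lemma alt_nil[simp]: "alt_list []" by (simp add: alt_list_def)
lemma alt_single[simp]: "alt_list [a]" by (simp add: alt_list_def)
lemma alt_cons2[simp]: "alt_list (a # b # r) \<longleftrightarrow> a \<noteq> b \<and> alt_list (b # r)"
proof
  assume h: "alt_list (a # b # r)"
  have "a \<noteq> b" using h[unfolded alt_list_def, rule_format, of 0] by simp
  moreover have "alt_list (b # r)" unfolding alt_list_def
  proof (intro allI impI)
    fix i assume "Suc i < length (b # r)"
    then show "(b # r) ! i \<noteq> (b # r) ! Suc i"
      using h[unfolded alt_list_def, rule_format, of "Suc i"] by simp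
  qed
  ultimately show "a \<noteq> b \<and> alt_list (b # r)" by simp
next
  assume h: "a \<noteq> b \<and> alt_list (b # r)"
  show "alt_list (a # b # r)" unfolding alt_list_def
  proof (intro allI impI)
    fix i assume i: "Suc i < length (a # b # r)"
    show "(a # b # r) ! i \<noteq> (a # b # r) ! Suc i"
    proof (cases i)
      case 0 then show ?thesis using h by simp
    next
      case (Suc j) then show ?thesis using h i unfolding alt_list_def by auto
    qed
  qed
qed

lemma alternate_alt: "alternate w x y \<longleftrightarrow> alt_list (filter (\<lambda>z. z = x \<or> z = y) w)"
  by (simp add: alternate_def alt_list_def Let_def)

lemma alternate_sym: "alternate w x y \<longleftrightarrow> alternate w y x"
  proof -
  have "(\<lambda>z. z = x \<or> z = y) = (\<lambda>z. z = y \<or> z = x)" by auto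
  then show ?thesis unfolding alternate_alt by simp
qed

lemma fl1[simp]: "distinct L \<Longrightarrow> x \<in> set L \<Longrightarrow> y \<notin> set L \<Longrightarrow> filter (\<lambda>z. z = x \<or> z = y) L = [x]"
proof (induction L)
  case Nil then show ?case by simp
next
  case (Cons a L)
  then show ?case by (cases "a = x") (auto simp: filter_empty_conv)
qed

lemma fl0[simp]: "x \<notin> set L \<Longrightarrow> y \<notin> set L \<Longrightarrow> filter (\<lambda>z. z = x \<or> z = y) L = []"
  by (auto simp: filter_empty_conv)

lemma fl2: assumes "distinct Q" "x \<in> set Q" "y \<in> set Q" "x \<noteq> y"
  shows "filter (\<lambda>z. z = x \<or> z = y) Q = [x,y] \<or> filter (\<lambda>z. z = x \<or> z = y) Q = [y,x]"
proof -
  define f where "f = filter (\<lambda>z. z = x \<or> z = y) Q"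
  have d: "distinct f" using assms(1) by (simp add: f_def)
  have s: "set f = {x,y}" using assms(2,3) by (auto simp: f_def)
  have "length f = 2" using distinct_card[OF d] s assms(4) by simp
  then obtain a c where "f = [a,c]"
    by (metis (no_types, lifting) One_nat_def Suc_1 Suc_length_conv length_0_conv)
  then show ?thesis using s d unfolding f_def[symmetric]
    by (auto simp: doubleton_eq_iff)
qed

theorem mainTheorem8:
  fixes V A B :: "'a set" and E :: "'a \<Rightarrow> 'a \<Rightarrow> bool" and m :: nat
  assumes "simple_graph V E"
    and "m \<ge> 1" and "card A = m" and "card B = 2"
    and "A \<inter> B = {}" and "V = A \<union> B"
    and "\<forall>x\<in>A. \<forall>y\<in>A. x \<noteq> y \<longrightarrow> E x y"
    and "\<forall>x\<in>B. \<forall>y\<in>B. x \<noteq> y \<longrightarrow> E x y"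
  shows "word_representable V E"
proof -
  obtain b1 b2 where B: "B = {b1, b2}" and b12: "b1 \<noteq> b2"
    using assms(4) by (meson card_2_iff)
  have fin: "finite A" using assms(1,6) by (simp add: simple_graph_def)
  have sym: "\<And>x y. E x y \<Longrightarrow> E y x" using assms(1) by (simp add: simple_graph_def)
  define A0 where "A0 = {a\<in>A. \<not> E a b1 \<and> \<not> E a b2}"
  define A1 where "A1 = {a\<in>A. E a b1 \<and> \<not> E a b2}"
  define A2 where "A2 = {a\<in>A. \<not> E a b1 \<and> E a b2}"
  define A12 where "A12 = {a\<in>A. E a b1 \<and> E a b2}"
  obtain L0 where L0: "distinct L0" "set L0 = A0"
    using finite_distinct_list[of A0] fin by (auto simp: A0_def)
  obtain L1 where L1: "distinct L1" "set L1 = A1"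
    using finite_distinct_list[of A1] fin by (auto simp: A1_def)
  obtain L2 where L2: "distinct L2" "set L2 = A2"
    using finite_distinct_list[of A2] fin by (auto simp: A2_def)
  obtain L12 where L12: "distinct L12" "set L12 = A12"
    using finite_distinct_list[of A12] fin by (auto simp: A12_def)
  have b1A: "b1 \<notin> A" and b2A: "b2 \<notin> A" using assms(5) B by auto
  define Q where "Q = L2 @ L0 @ L1 @ L12"
  have dQ: "distinct Q" using L0 L1 L2 L12
    by (auto simp: Q_def A0_def A1_def A2_def A12_def)
  have sQ: "set Q = A" using L0 L1 L2 L12
    by (auto simp: Q_def A0_def A1_def A2_def A12_def)
  define w where "w = [b1] @ L2 @ [b2] @ L0 @ L1 @ L12 @ L2 @ L0 @ [b1] @ L1 @ [b2] @ L12"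
  have sw: "set w = V" using sQ assms(6) B by (auto simp: w_def Q_def)
  have AA: "alternate w x y" if "x \<in> A" "y \<in> A" "x \<noteq> y" for x y
  proof -
    have "filter (\<lambda>z. z = x \<or> z = y) w = filter (\<lambda>z. z = x \<or> z = y) Q @ filter (\<lambda>z. z = x \<or> z = y) Q"
      using that b1A b2A by (auto simp: w_def Q_def)
    then show ?thesis using fl2[OF dQ, of x y] that sQ by (auto simp: alternate_alt)
  qed
  have AB: "alternate w x y \<longleftrightarrow> E x y" if "x \<in> A" "y \<in> B" for x y
  proof -
    have xy: "x \<noteq> b1" "x \<noteq> b2" using that b1A b2A by auto
    have "x \<in> A0 \<or> x \<in> A1 \<or> x \<in> A2 \<or> x \<in> A12" using that(1)
      by (auto simp: A0_def A1_def A2_def A12_def)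
    moreover have disj: "A0 \<inter> A1 = {}" "A0 \<inter> A2 = {}" "A0 \<inter> A12 = {}" "A1 \<inter> A2 = {}"
      "A1 \<inter> A12 = {}" "A2 \<inter> A12 = {}"
      by (auto simp: A0_def A1_def A2_def A12_def)
    moreover have "b1 \<notin> A0" "b1 \<notin> A1" "b1 \<notin> A2" "b1 \<notin> A12"
      "b2 \<notin> A0" "b2 \<notin> A1" "b2 \<notin> A2" "b2 \<notin> A12"
      using b1A b2A by (auto simp: A0_def A1_def A2_def A12_def)
    moreover note L0 L1 L2 L12
    ultimately have sets: "x \<in> set L0 \<or> x \<in> set L1 \<or> x \<in> set L2 \<or> x \<in> set L12"
      "b1 \<notin> set L0" "b1 \<notin> set L1" "b1 \<notin> set L2" "b1 \<notin> set L12"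
      "b2 \<notin> set L0" "b2 \<notin> set L1" "b2 \<notin> set L2" "b2 \<notin> set L12"
      by auto
    have y: "y = b1 \<or> y = b2" using that(2) B by auto
    have ds: "set L0 \<inter> set L1 = {}" "set L0 \<inter> set L2 = {}" "set L0 \<inter> set L12 = {}"
      "set L1 \<inter> set L2 = {}" "set L1 \<inter> set L12 = {}" "set L2 \<inter> set L12 = {}"
      using disj L0 L1 L2 L12 by auto
    have Es: "x \<in> set L0 \<Longrightarrow> \<not> E x b1 \<and> \<not> E x b2"
      "x \<in> set L1 \<Longrightarrow> E x b1 \<and> \<not> E x b2"
      "x \<in> set L2 \<Longrightarrow> \<not> E x b1 \<and> E x b2"
      "x \<in> set L12 \<Longrightarrow> E x b1 \<and> E x b2"
      using L0 L1 L2 L12 by (auto simp: A0_def A1_def A2_def A12_def)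
    note bs = sets(2-9)
    have dd: "distinct L0" "distinct L1" "distinct L2" "distinct L12" using L0 L1 L2 L12 by auto
    show ?thesis
      using sets(1) y
    proof (elim disjE)
      assume h: "x \<in> set L0" "y = b1"
      then have "x \<notin> set L1" "x \<notin> set L2" "x \<notin> set L12" using ds by blast+
      then show ?thesis using h Es(1) bs dd xy b12 by (simp add: alternate_alt w_def)
    next
      assume h: "x \<in> set L0" "y = b2"
      then have "x \<notin> set L1" "x \<notin> set L2" "x \<notin> set L12" using ds by blast+
      then show ?thesis using h Es(1) bs dd xy b12 by (simp add: alternate_alt w_def)
    next
      assume h: "x \<in> set L1" "y = b1"
      then have "x \<notin> set L0" "x \<notin> set L2" "x \<notin> set L12" using ds by blast+
      then show ?thesis using h Es(2) bs dd xy b12 by (simp add: alternate_alt w_def)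
    next
      assume h: "x \<in> set L1" "y = b2"
      then have "x \<notin> set L0" "x \<notin> set L2" "x \<notin> set L12" using ds by blast+
      then show ?thesis using h Es(2) bs dd xy b12 by (simp add: alternate_alt w_def)
    next
      assume h: "x \<in> set L2" "y = b1"
      then have "x \<notin> set L0" "x \<notin> set L1" "x \<notin> set L12" using ds by blast+
      then show ?thesis using h Es(3) bs dd xy b12 by (simp add: alternate_alt w_def)
    next
      assume h: "x \<in> set L2" "y = b2"
      then have "x \<notin> set L0" "x \<notin> set L1" "x \<notin> set L12" using ds by blast+
      then show ?thesis using h Es(3) bs dd xy b12 by (simp add: alternate_alt w_def)
    next
      assume h: "x \<in> set L12" "y = b1"
      then have "x \<notin> set L0" "x \<notin> set L1" "x \<notin> set L2" using ds by blast+
      then show ?thesis using h Es(4) bs dd xy b12 by (simp add: alternate_alt w_def)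
    next
      assume h: "x \<in> set L12" "y = b2"
      then have "x \<notin> set L0" "x \<notin> set L1" "x \<notin> set L2" using ds by blast+
      then show ?thesis using h Es(4) bs dd xy b12 by (simp add: alternate_alt w_def)
    qed
  qed
  have BB: "alternate w b1 b2"
  proof -
    have "b1 \<notin> set Q" "b2 \<notin> set Q" using sQ b1A b2A by auto
    then show ?thesis using b12 by (simp add: alternate_alt w_def Q_def)
  qed
  show ?thesis unfolding word_representable_def
  proof (intro exI conjI ballI impI)
    show "set w = V" by (rule sw)
  next
    fix x y assume "x \<in> V" "y \<in> V" "x \<noteq> y"
    then consider "x \<in> A" "y \<in> A" | "x \<in> A" "y \<in> B" | "x \<in> B" "y \<in> A" | "x \<in> B" "y \<in> B"
      using assms(6) by blast
    then show "alternate w x y \<longleftrightarrow> E x y"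
    proof cases
      case 1 then show ?thesis using AA assms(7) \<open>x \<noteq> y\<close> by blast
    next
      case 2 then show ?thesis using AB by blast
    next
      case 3
      then have "alternate w y x \<longleftrightarrow> E y x" using AB by blast
      moreover have "E y x \<longleftrightarrow> E x y" using sym by blast
      ultimately show ?thesis using alternate_sym[of w x y] by simp
    next
      case 4
      then have "(x = b1 \<and> y = b2) \<or> (x = b2 \<and> y = b1)" using \<open>x \<noteq> y\<close> B by blast
      moreover have "E b1 b2" "E b2 b1" using assms(8) B b12 by auto
      moreover have "alternate w b2 b1" using BB alternate_sym[of w b2 b1] by simp
      ultimately show ?thesis using BB by blast
    qed
  qed
qed

end
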